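(* Let $n\ge2$, $1\le s\le\lfloor n/2\rfloor$, $0\le t\le\lfloor n/2\rfloor$. Let $E_0\subset\mathbb F_2^s$, $\overline{E_0}=\mathbb F_2^s\setminus E_0$, and $E_1=\overline{E_0}\times\mathbb F_2^t$. Let $\phi_0:E_0\to\mathbb F_2^{n-s}$ and $\phi_1:E_1\to\mathbb F_2^{n-s-t}$ be injective maps. For $X=(x_1,\dots,x_n)\in\mathbb F_2^n$ write $X_{(i,j)}=(x_i,\dots,x_j)$. Define $f:\mathbb F_2^n\to\mathbb F_2$ by $f(X)=\phi_0(X_{(1,s)})\cdot X_{(s+1,n)}$ if $X_{(1,s)}\in E_0$, and $f(X)=\phi_1(X_{(1,s+t)})\cdot X_{(s+t+1,n)}$ if $X_{(1,s+t)}\in E_1$. Let $T_0=\phi_0(E_0)$ and $T_1=\phi_1(E_1)$. Then: (a) if $t\ne0$ and $T_0\subset\mathbb F_2^t\times\overline{T_1}$, where $\overline{T_1}=\mathbb F_2^{n-s-t}\setminus T_1$, then $W_f(\omega)\in\{0,\pm2^{n-s},\pm2^{n-s-t}\}$ for all $\omega\in\mathbb F_2^n$; (b) if $t=0$, $T_0\cap T_1\ne\emptyset$ and $T_0\ne T_1$, then $W_f(\omega)\in\{0,\pm2^{n-s},\pm2^{n-s+1}\}$ for all $\omega\in\mathbb F_2^n$.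
   Context: $W_f(\omega)=\sum_{X\in\mathbb F_2^n}(-1)^{f(X)\oplus\omega\cdot X}$, with $\cdot$ the dot product over $\mathbb F_2$. *)

theory Defs
  imports Main
begin

text \<open>Vectors of F_2^k are modelled as boolean lists of length k (True = 1).
  Addition in F_2 is exclusive or, i.e. inequality of booleans.\<close>

definition vecs :: "nat \<Rightarrow> bool list set" where
  "vecs k = {xs. length xs = k}"

definition dotp :: "bool list \<Rightarrow> bool list \<Rightarrow> bool" where
  "dotp xs ys = odd (card {i. i < length xs \<and> i < length ys \<and> xs ! i \<and> ys ! i})"

definition walsh :: "nat \<Rightarrow> (bool list \<Rightarrow> bool) \<Rightarrow> bool list \<Rightarrow> int" where
  "walsh n f \<omega> = (\<Sum>X\<in>vecs n. (-1::int) ^ (if f X \<noteq> dotp \<omega> X then 1 else 0))"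

definition E1set :: "nat \<Rightarrow> nat \<Rightarrow> bool list set \<Rightarrow> bool list set" where
  "E1set s t E0 = {u @ v | u v. u \<in> vecs s - E0 \<and> v \<in> vecs t}"

definition fconstr :: "nat \<Rightarrow> nat \<Rightarrow> bool list set \<Rightarrow> (bool list \<Rightarrow> bool list)
    \<Rightarrow> (bool list \<Rightarrow> bool list) \<Rightarrow> bool list \<Rightarrow> bool" where
  "fconstr s t E0 \<phi>0 \<phi>1 X =
     (if take s X \<in> E0 then dotp (\<phi>0 (take s X)) (drop s X)
      else dotp (\<phi>1 (take (s + t) X)) (drop (s + t) X))"

end

theory Submission
  imports Defs
begin
definition sg :: "bool \<Rightarrow> int" where "sg b = (if b then -1 else 1)"

lemma sg_pow: "(-1::int) ^ (if P then 1 else 0) = sg P" by (simp add: sg_def)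

lemma sg_xor: "sg (A \<noteq> B) = sg A * sg B" by (auto simp: sg_def)

lemma finite_vecs: "finite (vecs k)"
  using finite_lists_length_eq[of "UNIV::bool set" k] by (simp add: vecs_def)

lemma dotp_Nil: "dotp [] ys = False" "dotp xs [] = False"
  by (auto simp: dotp_def)

lemma dotp_Cons: "dotp (p#ps) (q#qs) = ((p \<and> q) \<noteq> dotp ps qs)"
proof -
  let ?S = "{i. i < length ps \<and> i < length qs \<and> ps ! i \<and> qs ! i}"
  have eq: "{i. i < length (p#ps) \<and> i < length (q#qs) \<and> (p#ps) ! i \<and> (q#qs) ! i}
      = (if p \<and> q then insert 0 (Suc ` ?S) else Suc ` ?S)"
    apply (rule set_eqI)
    subgoal for i by (cases i) auto
    done
  have fin: "finite ?S" by simp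
  have c: "card (Suc ` ?S) = card ?S" by (simp add: card_image)
  show ?thesis unfolding dotp_def eq using c fin by (auto simp: card_insert_if)
qed

lemma dotp_append: "length a = length x \<Longrightarrow> dotp (a@b) (x@y) = (dotp a x \<noteq> dotp b y)"
proof (induction a arbitrary: x)
  case Nil then show ?case by (simp add: dotp_Nil)
next
  case (Cons p a) then obtain q x' where "x = q # x'" "length a = length x'" by (cases x) auto
  then show ?case using Cons by (auto simp: dotp_Cons)
qed

lemma vecs_append: "vecs (k+m) = (\<lambda>(u,y). u@y) ` (vecs k \<times> vecs m)"
proof
  show "vecs (k+m) \<subseteq> (\<lambda>(u,y). u@y) ` (vecs k \<times> vecs m)"
  proof
    fix X assume "X \<in> vecs (k+m)"
    then have "X = (\<lambda>(u,y). u@y) (take k X, drop k X)" "(take k X, drop k X) \<in> vecs k \<times> vecs m"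
      by (auto simp: vecs_def)
    then show "X \<in> (\<lambda>(u,y). u@y) ` (vecs k \<times> vecs m)" by blast
  qed
qed (auto simp: vecs_def)

lemma sum_vecs_append: "(\<Sum>X\<in>vecs (k+m). g X) = (\<Sum>u\<in>vecs k. \<Sum>y\<in>vecs m. g (u@y))"
proof -
  have inj: "inj_on (\<lambda>(u,y). u@y) (vecs k \<times> vecs m)"
    by (auto simp: inj_on_def vecs_def)
  have "(\<Sum>X\<in>vecs (k+m). g X) = (\<Sum>p\<in>vecs k \<times> vecs m. g ((\<lambda>(u,y). u@y) p))"
    unfolding vecs_append by (rule sum.reindex[OF inj, unfolded comp_def])
  also have "\<dots> = (\<Sum>(u,y)\<in>vecs k \<times> vecs m. g (u@y))"
    by (simp add: case_prod_beta')
  also have "\<dots> = (\<Sum>u\<in>vecs k. \<Sum>y\<in>vecs m. g (u@y))"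
    by (rule sum.cartesian_product[symmetric])
  finally show ?thesis .
qed

lemma vecs_Suc: "vecs (Suc m) = Cons True ` vecs m \<union> Cons False ` vecs m"
proof -
  have "\<And>X. length X = Suc m \<Longrightarrow> X \<in> Cons True ` vecs m \<union> Cons False ` vecs m"
  proof -
    fix X :: "bool list" assume "length X = Suc m"
    then obtain c y where "X = c # y" "length y = m" by (cases X) auto
    then show "X \<in> Cons True ` vecs m \<union> Cons False ` vecs m" by (cases c) (auto simp: vecs_def)
  qed
  then show ?thesis by (auto simp: vecs_def)
qed

lemma char_sum: "p \<in> vecs m \<Longrightarrow> q \<in> vecs m \<Longrightarrow>
   (\<Sum>y\<in>vecs m. sg (dotp p y \<noteq> dotp q y)) = (if p = q then 2^m else 0)"
proof (induction m arbitrary: p q)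
  case 0 then show ?case by (simp add: vecs_def dotp_Nil sg_def)
next
  case (Suc m)
  obtain a p' where p: "p = a # p'" "p' \<in> vecs m" using Suc.prems by (cases p) (auto simp: vecs_def)
  obtain b q' where q: "q = b # q'" "q' \<in> vecs m" using Suc.prems by (cases q) (auto simp: vecs_def)
  let ?g = "\<lambda>y. sg (dotp p y \<noteq> dotp q y)"
  let ?h = "\<lambda>y. sg (dotp p' y \<noteq> dotp q' y)"
  have "(\<Sum>y\<in>vecs (Suc m). ?g y) = (\<Sum>y\<in>Cons True ` vecs m. ?g y) + (\<Sum>y\<in>Cons False ` vecs m. ?g y)"
    unfolding vecs_Suc by (rule sum.union_disjoint) (auto simp: finite_vecs)
  also have "\<dots> = (\<Sum>y\<in>vecs m. ?g (True # y)) + (\<Sum>y\<in>vecs m. ?g (False # y))"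
    by (simp add: sum.reindex)
  also have "\<dots> = (\<Sum>y\<in>vecs m. sg (a \<noteq> b) * ?h y) + (\<Sum>y\<in>vecs m. ?h y)"
    by (intro arg_cong2[where f="(+)"] sum.cong) (auto simp: p q dotp_Cons sg_def)
  also have "\<dots> = (sg (a \<noteq> b) + 1) * (\<Sum>y\<in>vecs m. ?h y)"
    by (simp add: distrib_right sum_distrib_left sum.distrib)
  also have "\<dots> = (if p = q then 2^Suc m else 0)"
    using Suc.IH[OF p(2) q(2)] by (auto simp: p q sg_def)
  finally show ?case .
qed

lemma sum_sel:
  assumes "finite A" "inj_on \<phi> A" "\<forall>x\<in>A. g x \<in> {-1,1::int}"
  shows "(\<Sum>x\<in>A. if \<phi> x = \<beta> then g x else 0) \<in> (if \<beta> \<in> \<phi>`A then {-1,1} else {0})"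
proof (cases "\<beta> \<in> \<phi>`A")
  case True
  then obtain x0 where x0: "x0 \<in> A" "\<phi> x0 = \<beta>" by blast
  have "(\<Sum>x\<in>A. if \<phi> x = \<beta> then g x else 0) = (\<Sum>x\<in>A. if x = x0 then g x else 0)"
    using x0 assms(2) by (intro sum.cong) (auto dest: inj_onD)
  also have "\<dots> = g x0" using x0 assms(1) by simp
  finally show ?thesis using True x0 assms(3) by simp
next
  case False then show ?thesis by (auto intro!: sum.neutral)
qed


lemma walsh_decomp:
  assumes st: "s + t \<le> n" and E0: "E0 \<subseteq> vecs s"
    and im0: "\<phi>0 ` E0 \<subseteq> vecs (n - s)" and im1: "\<phi>1 ` (E1set s t E0) \<subseteq> vecs (n - s - t)"
    and om: "\<omega> \<in> vecs n"
  shows "walsh n (fconstr s t E0 \<phi>0 \<phi>1) \<omega> =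
     2^(n-s) * (\<Sum>u\<in>E0. if \<phi>0 u = drop s \<omega> then sg (dotp (take s \<omega>) u) else 0)
   + 2^(n-s-t) * (\<Sum>(u,v)\<in>(vecs s - E0) \<times> vecs t. if \<phi>1 (u@v) = drop t (drop s \<omega>)
         then sg (dotp (take s \<omega>) u \<noteq> dotp (take t (drop s \<omega>)) v) else 0)"
proof -
  define m where "m = n - s"
  define k where "k = n - s - t"
  define a where "a = take s \<omega>"
  define \<beta> where "\<beta> = drop s \<omega>"
  define b where "b = take t \<beta>"
  define c where "c = drop t \<beta>"
  let ?f = "fconstr s t E0 \<phi>0 \<phi>1"
  have nm: "n = s + m" and mk: "m = t + k" using st by (auto simp: m_def k_def)
  have la: "length a = s" and lb: "length b = t" and \<beta>v: "\<beta> \<in> vecs m" and cv: "c \<in> vecs k"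
    using om st by (auto simp: a_def \<beta>_def b_def c_def vecs_def m_def k_def)
  have \<omega>eq: "\<omega> = a @ \<beta>" and \<beta>eq: "\<beta> = b @ c" unfolding a_def \<beta>_def b_def c_def by (rule append_take_drop_id[symmetric])+
  define F where "F u = (\<Sum>y\<in>vecs m. sg (?f (u@y) \<noteq> dotp \<omega> (u@y)))" for u
  have "walsh n ?f \<omega> = (\<Sum>u\<in>vecs s. F u)"
    unfolding walsh_def F_def nm sum_vecs_append sg_pow ..
  also have "\<dots> = (\<Sum>u\<in>vecs s - E0. F u) + (\<Sum>u\<in>E0. F u)"
    by (rule sum.subset_diff[OF E0 finite_vecs])
  also have "(\<Sum>u\<in>E0. F u) = (\<Sum>u\<in>E0. 2^m * (if \<phi>0 u = \<beta> then sg (dotp a u) else 0))"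
  proof (rule sum.cong[OF refl])
    fix u assume u: "u \<in> E0"
    then have lu: "length u = s" using E0 by (auto simp: vecs_def)
    have pv: "\<phi>0 u \<in> vecs m" using u im0 m_def by auto
    have "F u = (\<Sum>y\<in>vecs m. sg (dotp a u) * sg (dotp (\<phi>0 u) y \<noteq> dotp \<beta> y))"
      unfolding F_def
    proof (rule sum.cong[OF refl])
      fix y assume "y \<in> vecs m"
      have "?f (u@y) = dotp (\<phi>0 u) y" using u lu by (simp add: fconstr_def)
      moreover have "dotp \<omega> (u@y) = (dotp a u \<noteq> dotp \<beta> y)"
        unfolding \<omega>eq using la lu by (simp add: dotp_append)
      ultimately show "sg (?f (u@y) \<noteq> dotp \<omega> (u@y)) = sg (dotp a u) * sg (dotp (\<phi>0 u) y \<noteq> dotp \<beta> y)"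
        by (auto simp: sg_def)
    qed
    also have "\<dots> = sg (dotp a u) * (if \<phi>0 u = \<beta> then 2^m else 0)"
      unfolding sum_distrib_left[symmetric] char_sum[OF pv \<beta>v] ..
    finally show "F u = 2^m * (if \<phi>0 u = \<beta> then sg (dotp a u) else 0)" by simp
  qed
  also have "(\<Sum>u\<in>vecs s - E0. F u) = (\<Sum>u\<in>vecs s - E0. \<Sum>v\<in>vecs t.
       2^k * (if \<phi>1 (u@v) = c then sg (dotp a u \<noteq> dotp b v) else 0))"
  proof (rule sum.cong[OF refl])
    fix u assume u: "u \<in> vecs s - E0"
    then have lu: "length u = s" by (auto simp: vecs_def)
    have "F u = (\<Sum>v\<in>vecs t. \<Sum>z\<in>vecs k. sg (?f (u@v@z) \<noteq> dotp \<omega> (u@v@z)))"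
      unfolding F_def mk sum_vecs_append by simp
    also have "\<dots> = (\<Sum>v\<in>vecs t. 2^k * (if \<phi>1 (u@v) = c then sg (dotp a u \<noteq> dotp b v) else 0))"
    proof (rule sum.cong[OF refl])
      fix v assume v: "v \<in> vecs t"
      then have lv: "length v = t" by (simp add: vecs_def)
      have uvE: "u @ v \<in> E1set s t E0" using u v by (auto simp: E1set_def)
      have pv: "\<phi>1 (u@v) \<in> vecs k" using uvE im1 k_def by auto
      have "(\<Sum>z\<in>vecs k. sg (?f (u@v@z) \<noteq> dotp \<omega> (u@v@z)))
          = (\<Sum>z\<in>vecs k. sg (dotp a u \<noteq> dotp b v) * sg (dotp (\<phi>1 (u@v)) z \<noteq> dotp c z))"
      proof (rule sum.cong[OF refl])
        fix z assume "z \<in> vecs k"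
        have "take s (u@v@z) = u" "take (s+t) (u@v@z) = u@v" "drop (s+t) (u@v@z) = z"
          using lu lv by simp_all
        then have "?f (u@v@z) = dotp (\<phi>1 (u@v)) z" using u by (simp add: fconstr_def)
        moreover have "dotp \<omega> (u@v@z) = (dotp a u \<noteq> (dotp b v \<noteq> dotp c z))"
          unfolding \<omega>eq \<beta>eq using la lu lb lv by (simp add: dotp_append)
        ultimately show "sg (?f (u@v@z) \<noteq> dotp \<omega> (u@v@z)) = sg (dotp a u \<noteq> dotp b v) * sg (dotp (\<phi>1 (u@v)) z \<noteq> dotp c z)"
          by (auto simp: sg_def)
      qed
      also have "\<dots> = sg (dotp a u \<noteq> dotp b v) * (if \<phi>1 (u@v) = c then 2^k else 0)"
        unfolding sum_distrib_left[symmetric] char_sum[OF pv cv] ..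
      finally show "(\<Sum>z\<in>vecs k. sg (?f (u@v@z) \<noteq> dotp \<omega> (u@v@z))) = 2^k * (if \<phi>1 (u@v) = c then sg (dotp a u \<noteq> dotp b v) else 0)"
        by simp
    qed
    finally show "F u = (\<Sum>v\<in>vecs t. 2^k * (if \<phi>1 (u@v) = c then sg (dotp a u \<noteq> dotp b v) else 0))" .
  qed
  finally have W: "walsh n ?f \<omega> = (\<Sum>u\<in>vecs s - E0. \<Sum>v\<in>vecs t.
       2^k * (if \<phi>1 (u@v) = c then sg (dotp a u \<noteq> dotp b v) else 0)) + (\<Sum>u\<in>E0. 2^m * (if \<phi>0 u = \<beta> then sg (dotp a u) else 0))" .
  show ?thesis
    unfolding W sum.cartesian_product[symmetric] sum_distrib_left m_def k_def a_def b_def c_def \<beta>_def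
    by (simp add: add.commute)
qed


lemma fin_b: "(e0::int) \<in> {-1,0,1} \<Longrightarrow> e1 \<in> {-1,0,1} \<Longrightarrow> (c::int) * (e0+e1) \<in> {0, c, -c, 2*c, -(2*c)}" by auto
lemma fin_a1: "(e0::int) \<in> {-1,1} \<Longrightarrow> (c::int)*e0 + d*0 \<in> {0, c, -c, d, -d}" by auto
lemma fin_a2: "(e1::int) \<in> {-1,0,1} \<Longrightarrow> (c::int)*0 + d*e1 \<in> {0, c, -c, d, -d}" by auto

theorem mainTheorem10:
  fixes n s t :: nat and E0 :: "bool list set" and \<phi>0 \<phi>1 :: "bool list \<Rightarrow> bool list"
  assumes "n \<ge> 2" and "1 \<le> s" and "s \<le> n div 2" and "t \<le> n div 2"
    and "E0 \<subseteq> vecs s"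
    and "inj_on \<phi>0 E0" and "\<phi>0 ` E0 \<subseteq> vecs (n - s)"
    and "inj_on \<phi>1 (E1set s t E0)" and "\<phi>1 ` (E1set s t E0) \<subseteq> vecs (n - s - t)"
  shows "(t \<noteq> 0 \<and>
           \<phi>0 ` E0 \<subseteq> {a @ b | a b. a \<in> vecs t \<and> b \<in> vecs (n - s - t) - \<phi>1 ` (E1set s t E0)}
          \<longrightarrow> (\<forall>\<omega>\<in>vecs n. walsh n (fconstr s t E0 \<phi>0 \<phi>1) \<omega> \<in>
                 {0, 2 ^ (n - s), - (2 ^ (n - s)), 2 ^ (n - s - t), - (2 ^ (n - s - t))}))
       \<and> (t = 0 \<and> \<phi>0 ` E0 \<inter> \<phi>1 ` (E1set s t E0) \<noteq> {} \<and> \<phi>0 ` E0 \<noteq> \<phi>1 ` (E1set s t E0)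
          \<longrightarrow> (\<forall>\<omega>\<in>vecs n. walsh n (fconstr s t E0 \<phi>0 \<phi>1) \<omega> \<in>
                 {0, 2 ^ (n - s), - (2 ^ (n - s)), 2 ^ (n - s + 1), - (2 ^ (n - s + 1))}))"
proof -
  have st: "s + t \<le> n" using assms(3,4) by linarith
  let ?A = "(vecs s - E0) \<times> vecs t"
  let ?T1 = "\<phi>1 ` (E1set s t E0)"
  have E1eq: "E1set s t E0 = (\<lambda>(u,v). u@v) ` ?A" by (auto simp: E1set_def)
  have injA: "inj_on (\<lambda>(u,v). \<phi>1 (u@v)) ?A"
  proof (rule inj_onI)
    fix x y assume hx: "x \<in> ?A" and hy: "y \<in> ?A" and e: "(\<lambda>(u,v). \<phi>1 (u@v)) x = (\<lambda>(u,v). \<phi>1 (u@v)) y"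
    obtain u v where x: "x = (u,v)" by (cases x)
    obtain u' v' where y: "y = (u',v')" by (cases y)
    have h: "(u, v) \<in> ?A" "(u', v') \<in> ?A" "\<phi>1 (u@v) = \<phi>1 (u'@v')" using hx hy e x y by auto
    have "u@v \<in> E1set s t E0" "u'@v' \<in> E1set s t E0" using h(1,2) E1eq by auto
    then have "u@v = u'@v'" using h(3) assms(8) by (auto dest: inj_onD)
    moreover have "length u = length u'" using h(1,2) by (simp add: vecs_def)
    ultimately show "x = y" using x y by simp
  qed
  have imA: "(\<lambda>(u,v). \<phi>1 (u@v)) ` ?A = ?T1" unfolding E1eq image_image by (simp add: case_prod_beta')
  have key: "\<exists>e0 e1. walsh n (fconstr s t E0 \<phi>0 \<phi>1) \<omega> = 2^(n-s) * e0 + 2^(n-s-t) * e1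
      \<and> e0 \<in> (if drop s \<omega> \<in> \<phi>0 ` E0 then {-1,1} else {0})
      \<and> e1 \<in> (if drop t (drop s \<omega>) \<in> ?T1 then {-1,1} else {0})" if om: "\<omega> \<in> vecs n" for \<omega>
  proof -
    let ?S0 = "(\<Sum>u\<in>E0. if \<phi>0 u = drop s \<omega> then sg (dotp (take s \<omega>) u) else 0)"
    let ?S1 = "(\<Sum>(u,v)\<in>?A. if \<phi>1 (u@v) = drop t (drop s \<omega>)
         then sg (dotp (take s \<omega>) u \<noteq> dotp (take t (drop s \<omega>)) v) else 0)"
    have W: "walsh n (fconstr s t E0 \<phi>0 \<phi>1) \<omega> = 2^(n-s) * ?S0 + 2^(n-s-t) * ?S1"
      by (rule walsh_decomp[OF st assms(5,7,9) om])
    have h0: "?S0 \<in> (if drop s \<omega> \<in> \<phi>0 ` E0 then {-1,1} else {0})"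
      by (rule sum_sel) (use assms(5,6) finite_subset[OF assms(5) finite_vecs] in \<open>auto simp: sg_def\<close>)
    have "(\<Sum>x\<in>?A. if (\<lambda>(u,v). \<phi>1 (u@v)) x = drop t (drop s \<omega>)
            then (\<lambda>(u,v). sg (dotp (take s \<omega>) u \<noteq> dotp (take t (drop s \<omega>)) v)) x else 0)
        \<in> (if drop t (drop s \<omega>) \<in> (\<lambda>(u,v). \<phi>1 (u@v)) ` ?A then {-1,1} else {0})"
      by (rule sum_sel) (use injA finite_vecs in \<open>auto simp: sg_def\<close>)
    moreover have eqS: "?S1 = (\<Sum>x\<in>?A. if (\<lambda>(u,v). \<phi>1 (u@v)) x = drop t (drop s \<omega>)
            then (\<lambda>(u,v). sg (dotp (take s \<omega>) u \<noteq> dotp (take t (drop s \<omega>)) v)) x else 0)"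
      by (intro sum.cong refl) (auto split: prod.splits)
    ultimately have h1: "?S1 \<in> (if drop t (drop s \<omega>) \<in> ?T1 then {-1,1} else {0})"
      unfolding imA by simp
    from W h0 h1 show ?thesis by blast
  qed
  show ?thesis
  proof (intro conjI impI ballI)
    fix \<omega> assume h: "t \<noteq> 0 \<and> \<phi>0 ` E0 \<subseteq> {a @ b | a b. a \<in> vecs t \<and> b \<in> vecs (n - s - t) - ?T1}"
      and om: "\<omega> \<in> vecs n"
    obtain e0 e1 where W: "walsh n (fconstr s t E0 \<phi>0 \<phi>1) \<omega> = 2^(n-s) * e0 + 2^(n-s-t) * e1"
      and e0: "e0 \<in> (if drop s \<omega> \<in> \<phi>0 ` E0 then {-1,1} else {0})"
      and e1: "e1 \<in> (if drop t (drop s \<omega>) \<in> ?T1 then {-1,1} else {0})"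
      using key[OF om] by blast
    show "walsh n (fconstr s t E0 \<phi>0 \<phi>1) \<omega> \<in>
                 {0, 2 ^ (n - s), - (2 ^ (n - s)), 2 ^ (n - s - t), - (2 ^ (n - s - t))}"
    proof (cases "drop s \<omega> \<in> \<phi>0 ` E0")
      case True
      then obtain a b where ab: "drop s \<omega> = a @ b" "a \<in> vecs t" "b \<notin> ?T1" using h by blast
      then have "drop t (drop s \<omega>) = b" by (simp add: vecs_def)
      then have "e1 = 0" using e1 ab by simp
      have "e0 \<in> {-1,1}" using e0 True by simp
      then show ?thesis unfolding W \<open>e1 = 0\<close> by (rule fin_a1)
    next
      case False
      then have "e0 = 0" using e0 by simp
      have "e1 \<in> {-1,0,1}" using e1 by (auto split: if_splits)
      then show ?thesis unfolding W \<open>e0 = 0\<close> by (rule fin_a2)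
    qed
  next
    fix \<omega> assume h: "t = 0 \<and> \<phi>0 ` E0 \<inter> ?T1 \<noteq> {} \<and> \<phi>0 ` E0 \<noteq> ?T1"
      and om: "\<omega> \<in> vecs n"
    obtain e0 e1 where W: "walsh n (fconstr s t E0 \<phi>0 \<phi>1) \<omega> = 2^(n-s) * e0 + 2^(n-s-t) * e1"
      and e0': "e0 \<in> (if drop s \<omega> \<in> \<phi>0 ` E0 then {-1,1} else {0})"
      and e1': "e1 \<in> (if drop t (drop s \<omega>) \<in> ?T1 then {-1,1} else {0})"
      using key[OF om] by blast
    have e0: "e0 \<in> {-1,0,1}" using e0' by (auto split: if_splits)
    have e1: "e1 \<in> {-1,0,1}" using e1' by (auto split: if_splits)
    have W': "walsh n (fconstr s t E0 \<phi>0 \<phi>1) \<omega> = 2^(n-s) * (e0 + e1)"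
      using W h by (simp add: algebra_simps)
    have p: "(2::int)^(n-s+1) = 2 * 2^(n-s)" by simp
    show "walsh n (fconstr s t E0 \<phi>0 \<phi>1) \<omega> \<in>
                 {0, 2 ^ (n - s), - (2 ^ (n - s)), 2 ^ (n - s + 1), - (2 ^ (n - s + 1))}"
      unfolding W' p by (rule fin_b[OF e0 e1])
  qed
qed

end
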